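(* (Provably in $\mathsf{Z}^-_{\mathrm{FTM}\omega}$.) Let $U,V$ be any sets. Then $U\times V$ is a set, and the collection $\mathcal P_{\mathrm{fin}}(U)$ of all finite subsets of $U$ and the collection $U^{<\omega}$ of all finite sequences of elements of $U$ are sets as well.
   Context: $\mathsf{Z}^-_{\mathrm{FTM}\omega}$ is Zermelo set theory without Power Set and Choice (Extensionality, Pairing, Union, Infinity, Regularity, Separation) plus: (FC) every set $X$ has a superset $Y$ such that every finite $x\subseteq Y$ belongs to $Y$; (TS) every set has a transitive superset; (MC) every set binary relation $A$ that is well-founded and extensional admits a transitive set $X$ and a bijection $\eta$ from its field onto $X$ with $jAk\iff\eta(j)\in\eta(k)$; (Count) every set admits an injection into $\omega$. *)

theory Defs
  imports Main
begin

text \<open>A model of set theory is a type 'a with a binary membership relation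
  e :: 'a => 'a => bool (e x y means "x is an element of y").
  Provability in a first-order theory is rendered as truth in every model
  (Goedel completeness).\<close>

section \<open>First-order formulas of the language {member} (for the Separation schema)\<close>

datatype fm =
    FMem nat nat
  | FEq nat nat
  | FNeg fm
  | FAnd fm fm
  | FEx nat fm

fun sat :: "('a \<Rightarrow> 'a \<Rightarrow> bool) \<Rightarrow> (nat \<Rightarrow> 'a) \<Rightarrow> fm \<Rightarrow> bool" where
  "sat e env (FMem i j) = e (env i) (env j)"
| "sat e env (FEq i j) = (env i = env j)"
| "sat e env (FNeg p) = (\<not> sat e env p)"
| "sat e env (FAnd p q) = (sat e env p \<and> sat e env q)"
| "sat e env (FEx i p) = (\<exists>a. sat e (env(i := a)) p)"

definition subset_m :: "('a \<Rightarrow> 'a \<Rightarrow> bool) \<Rightarrow> 'a \<Rightarrow> 'a \<Rightarrow> bool" where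
  "subset_m e x y \<longleftrightarrow> (\<forall>z. e z x \<longrightarrow> e z y)"

definition empty_m :: "('a \<Rightarrow> 'a \<Rightarrow> bool) \<Rightarrow> 'a \<Rightarrow> bool" where
  "empty_m e x \<longleftrightarrow> (\<forall>z. \<not> e z x)"

definition transitive_m :: "('a \<Rightarrow> 'a \<Rightarrow> bool) \<Rightarrow> 'a \<Rightarrow> bool" where
  "transitive_m e x \<longleftrightarrow> (\<forall>y z. e y x \<and> e z y \<longrightarrow> e z x)"

definition upair_m :: "('a \<Rightarrow> 'a \<Rightarrow> bool) \<Rightarrow> 'a \<Rightarrow> 'a \<Rightarrow> 'a \<Rightarrow> bool" where
  "upair_m e a b p \<longleftrightarrow> (\<forall>z. e z p \<longleftrightarrow> z = a \<or> z = b)"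

definition pair_m :: "('a \<Rightarrow> 'a \<Rightarrow> bool) \<Rightarrow> 'a \<Rightarrow> 'a \<Rightarrow> 'a \<Rightarrow> bool" where
  "pair_m e a b p \<longleftrightarrow> (\<exists>s t. upair_m e a a s \<and> upair_m e a b t \<and> upair_m e s t p)"

definition succ_m :: "('a \<Rightarrow> 'a \<Rightarrow> bool) \<Rightarrow> 'a \<Rightarrow> 'a \<Rightarrow> bool" where
  "succ_m e x y \<longleftrightarrow> (\<forall>z. e z y \<longleftrightarrow> e z x \<or> z = x)"

definition inductive_m :: "('a \<Rightarrow> 'a \<Rightarrow> bool) \<Rightarrow> 'a \<Rightarrow> bool" where
  "inductive_m e x \<longleftrightarrow> (\<exists>z0. empty_m e z0 \<and> e z0 x) \<and> (\<forall>y. e y x \<longrightarrow> (\<exists>s. succ_m e y s \<and> e s x))"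

definition omega_m :: "('a \<Rightarrow> 'a \<Rightarrow> bool) \<Rightarrow> 'a \<Rightarrow> bool" where
  "omega_m e w \<longleftrightarrow> inductive_m e w \<and> (\<forall>x. inductive_m e x \<longrightarrow> subset_m e w x)"

definition in_omega_m :: "('a \<Rightarrow> 'a \<Rightarrow> bool) \<Rightarrow> 'a \<Rightarrow> bool" where
  "in_omega_m e n \<longleftrightarrow> (\<exists>w. omega_m e w \<and> e n w)"

definition rel_m :: "('a \<Rightarrow> 'a \<Rightarrow> bool) \<Rightarrow> 'a \<Rightarrow> 'a \<Rightarrow> 'a \<Rightarrow> bool" where
  "rel_m e r a b \<longleftrightarrow> (\<exists>p. e p r \<and> pair_m e a b p)"

definition relation_m :: "('a \<Rightarrow> 'a \<Rightarrow> bool) \<Rightarrow> 'a \<Rightarrow> bool" where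
  "relation_m e r \<longleftrightarrow> (\<forall>p. e p r \<longrightarrow> (\<exists>a b. pair_m e a b p))"

definition function_m :: "('a \<Rightarrow> 'a \<Rightarrow> bool) \<Rightarrow> 'a \<Rightarrow> bool" where
  "function_m e f \<longleftrightarrow> relation_m e f \<and>
     (\<forall>a b b'. rel_m e f a b \<and> rel_m e f a b' \<longrightarrow> b = b')"

definition dom_is_m :: "('a \<Rightarrow> 'a \<Rightarrow> bool) \<Rightarrow> 'a \<Rightarrow> 'a \<Rightarrow> bool" where
  "dom_is_m e f A \<longleftrightarrow> (\<forall>a. e a A \<longleftrightarrow> (\<exists>b. rel_m e f a b))"

definition ran_is_m :: "('a \<Rightarrow> 'a \<Rightarrow> bool) \<Rightarrow> 'a \<Rightarrow> 'a \<Rightarrow> bool" where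
  "ran_is_m e f B \<longleftrightarrow> (\<forall>b. e b B \<longleftrightarrow> (\<exists>a. rel_m e f a b))"

definition injective_m :: "('a \<Rightarrow> 'a \<Rightarrow> bool) \<Rightarrow> 'a \<Rightarrow> bool" where
  "injective_m e f \<longleftrightarrow> (\<forall>a a' b. rel_m e f a b \<and> rel_m e f a' b \<longrightarrow> a = a')"

definition bij_m :: "('a \<Rightarrow> 'a \<Rightarrow> bool) \<Rightarrow> 'a \<Rightarrow> 'a \<Rightarrow> 'a \<Rightarrow> bool" where
  "bij_m e f A B \<longleftrightarrow> function_m e f \<and> dom_is_m e f A \<and> ran_is_m e f B \<and> injective_m e f"

definition finite_m :: "('a \<Rightarrow> 'a \<Rightarrow> bool) \<Rightarrow> 'a \<Rightarrow> bool" where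
  "finite_m e x \<longleftrightarrow> (\<exists>n f. in_omega_m e n \<and> bij_m e f n x)"

definition finseq_m :: "('a \<Rightarrow> 'a \<Rightarrow> bool) \<Rightarrow> 'a \<Rightarrow> 'a \<Rightarrow> bool" where
  "finseq_m e U s \<longleftrightarrow> (\<exists>n. in_omega_m e n \<and> function_m e s \<and> dom_is_m e s n \<and>
      (\<forall>a b. rel_m e s a b \<longrightarrow> e b U))"

definition in_field_m :: "('a \<Rightarrow> 'a \<Rightarrow> bool) \<Rightarrow> 'a \<Rightarrow> 'a \<Rightarrow> bool" where
  "in_field_m e r x \<longleftrightarrow> (\<exists>y. rel_m e r x y \<or> rel_m e r y x)"

definition wf_m :: "('a \<Rightarrow> 'a \<Rightarrow> bool) \<Rightarrow> 'a \<Rightarrow> bool" where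
  "wf_m e r \<longleftrightarrow> (\<forall>s. (\<exists>y. e y s) \<and> (\<forall>y. e y s \<longrightarrow> in_field_m e r y) \<longrightarrow>
      (\<exists>m. e m s \<and> (\<forall>y. e y s \<longrightarrow> \<not> rel_m e r y m)))"

definition extensional_m :: "('a \<Rightarrow> 'a \<Rightarrow> bool) \<Rightarrow> 'a \<Rightarrow> bool" where
  "extensional_m e r \<longleftrightarrow> (\<forall>j k. in_field_m e r j \<and> in_field_m e r k \<and>
      (\<forall>i. rel_m e r i j \<longleftrightarrow> rel_m e r i k) \<longrightarrow> j = k)"

definition ax_ext :: "('a \<Rightarrow> 'a \<Rightarrow> bool) \<Rightarrow> bool" where
  "ax_ext e \<longleftrightarrow> (\<forall>x y. (\<forall>z. e z x \<longleftrightarrow> e z y) \<longrightarrow> x = y)"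

definition ax_pairing :: "('a \<Rightarrow> 'a \<Rightarrow> bool) \<Rightarrow> bool" where
  "ax_pairing e \<longleftrightarrow> (\<forall>a b. \<exists>p. upair_m e a b p)"

definition ax_union :: "('a \<Rightarrow> 'a \<Rightarrow> bool) \<Rightarrow> bool" where
  "ax_union e \<longleftrightarrow> (\<forall>x. \<exists>u. \<forall>z. e z u \<longleftrightarrow> (\<exists>y. e y x \<and> e z y))"

definition ax_infinity :: "('a \<Rightarrow> 'a \<Rightarrow> bool) \<Rightarrow> bool" where
  "ax_infinity e \<longleftrightarrow> (\<exists>x. inductive_m e x)"

definition ax_regularity :: "('a \<Rightarrow> 'a \<Rightarrow> bool) \<Rightarrow> bool" where
  "ax_regularity e \<longleftrightarrow> (\<forall>x. (\<exists>y. e y x) \<longrightarrow> (\<exists>y. e y x \<and> \<not> (\<exists>z. e z y \<and> e z x)))"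

text \<open>Separation schema: for every first-order formula phi (with parameters given by env,
  separated variable i): for every x there is y = {z \<in> x. phi(z)}.\<close>
definition ax_separation :: "('a \<Rightarrow> 'a \<Rightarrow> bool) \<Rightarrow> bool" where
  "ax_separation e \<longleftrightarrow> (\<forall>phi env i x. \<exists>y. \<forall>z. e z y \<longleftrightarrow> e z x \<and> sat e (env(i := z)) phi)"

definition ax_FC :: "('a \<Rightarrow> 'a \<Rightarrow> bool) \<Rightarrow> bool" where
  "ax_FC e \<longleftrightarrow> (\<forall>X. \<exists>Y. subset_m e X Y \<and>
      (\<forall>x. finite_m e x \<and> subset_m e x Y \<longrightarrow> e x Y))"

definition ax_TS :: "('a \<Rightarrow> 'a \<Rightarrow> bool) \<Rightarrow> bool" where
  "ax_TS e \<longleftrightarrow> (\<forall>X. \<exists>Y. subset_m e X Y \<and> transitive_m e Y)"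

definition ax_MC :: "('a \<Rightarrow> 'a \<Rightarrow> bool) \<Rightarrow> bool" where
  "ax_MC e \<longleftrightarrow> (\<forall>A. relation_m e A \<and> wf_m e A \<and> extensional_m e A \<longrightarrow>
      (\<exists>X \<eta>. transitive_m e X \<and> function_m e \<eta> \<and>
         (\<forall>j. (\<exists>b. rel_m e \<eta> j b) \<longleftrightarrow> in_field_m e A j) \<and>
         ran_is_m e \<eta> X \<and> injective_m e \<eta> \<and>
         (\<forall>j k b c. rel_m e \<eta> j b \<and> rel_m e \<eta> k c \<longrightarrow> (rel_m e A j k \<longleftrightarrow> e b c))))"

definition ax_count :: "('a \<Rightarrow> 'a \<Rightarrow> bool) \<Rightarrow> bool" where
  "ax_count e \<longleftrightarrow> (\<forall>X. \<exists>f. function_m e f \<and> dom_is_m e f X \<and> injective_m e f \<and>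
      (\<forall>a b. rel_m e f a b \<longrightarrow> in_omega_m e b))"

definition Z_FTM_omega :: "('a \<Rightarrow> 'a \<Rightarrow> bool) \<Rightarrow> bool" where
  "Z_FTM_omega e \<longleftrightarrow> ax_ext e \<and> ax_pairing e \<and> ax_union e \<and> ax_infinity e \<and>
     ax_regularity e \<and> ax_separation e \<and> ax_FC e \<and> ax_TS e \<and> ax_MC e \<and> ax_count e"

end

theory Submission
  imports Defs
begin


definition FOr where "FOr p q = FNeg (FAnd (FNeg p) (FNeg q))"
definition FImp where "FImp p q = FNeg (FAnd p (FNeg q))"
definition FIff where "FIff p q = FAnd (FImp p q) (FImp q p)"
definition FAll where "FAll i p = FNeg (FEx i (FNeg p))"

lemma sat_conn[simp]:
  "sat e env (FOr p q) = (sat e env p \<or> sat e env q)"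
  "sat e env (FImp p q) = (sat e env p \<longrightarrow> sat e env q)"
  "sat e env (FIff p q) = (sat e env p \<longleftrightarrow> sat e env q)"
  "sat e env (FAll i p) = (\<forall>a. sat e (env(i:=a)) p)"
  by (auto simp: FOr_def FImp_def FIff_def FAll_def)

definition "Fsubset x y k = FAll k (FImp (FMem k x) (FMem k y))"
definition "Fempty x k = FAll k (FNeg (FMem k x))"
definition "Fupair a b p k = FAll k (FIff (FMem k p) (FOr (FEq k a) (FEq k b)))"
definition "Fpair a b p k = FEx k (FEx (k+1) (FAnd (Fupair a a k (k+2)) (FAnd (Fupair a b (k+1) (k+2)) (Fupair k (k+1) p (k+2)))))"
definition "Fsucc x y k = FAll k (FIff (FMem k y) (FOr (FMem k x) (FEq k x)))"
definition "Finductive x k = FAnd (FEx k (FAnd (Fempty k (k+1)) (FMem k x))) (FAll k (FImp (FMem k x) (FEx (k+1) (FAnd (Fsucc k (k+1) (k+2)) (FMem (k+1) x)))))"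
definition "Fomega w k = FAnd (Finductive w k) (FAll k (FImp (Finductive k (k+1)) (Fsubset w k (k+1))))"
definition "Fin_omega n k = FEx k (FAnd (Fomega k (k+1)) (FMem n k))"
definition "Frel r a b k = FEx k (FAnd (FMem k r) (Fpair a b k (k+1)))"
definition "Frelation r k = FAll k (FImp (FMem k r) (FEx (k+1) (FEx (k+2) (Fpair (k+1) (k+2) k (k+3)))))"
definition "Ffunction f k = FAnd (Frelation f k) (FAll k (FAll (k+1) (FAll (k+2) (FImp (FAnd (Frel f k (k+1) (k+3)) (Frel f k (k+2) (k+3))) (FEq (k+1) (k+2))))))"
definition "Fdom f A k = FAll k (FIff (FMem k A) (FEx (k+1) (Frel f k (k+1) (k+2))))"
definition "Fran f B k = FAll k (FIff (FMem k B) (FEx (k+1) (Frel f (k+1) k (k+2))))"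
definition "Finj f k = FAll k (FAll (k+1) (FAll (k+2) (FImp (FAnd (Frel f k (k+2) (k+3)) (Frel f (k+1) (k+2) (k+3))) (FEq k (k+1)))))"
definition "Fbij f A B k = FAnd (Ffunction f k) (FAnd (Fdom f A k) (FAnd (Fran f B k) (Finj f k)))"
definition "Ffinite x k = FEx k (FEx (k+1) (FAnd (Fin_omega k (k+2)) (Fbij (k+1) k x (k+2))))"
definition "Ffinseq U s k = FEx k (FAnd (Fin_omega k (k+1)) (FAnd (Ffunction s (k+1)) (FAnd (Fdom s k (k+1)) (FAll (k+1) (FAll (k+2) (FImp (Frel s (k+1) (k+2) (k+3)) (FMem (k+2) U)))))))"

lemma sat_Fsubset[simp]: "x<k \<Longrightarrow> y<k \<Longrightarrow> sat e env (Fsubset x y k) = subset_m e (env x) (env y)"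
  by (simp add: Fsubset_def subset_m_def)
lemma sat_Fempty[simp]: "x<k \<Longrightarrow> sat e env (Fempty x k) = empty_m e (env x)"
  by (simp add: Fempty_def empty_m_def)
lemma sat_Fupair[simp]: "a<k \<Longrightarrow> b<k \<Longrightarrow> p<k \<Longrightarrow> sat e env (Fupair a b p k) = upair_m e (env a) (env b) (env p)"
  by (simp add: Fupair_def upair_m_def)
lemma sat_Fpair[simp]: "a<k \<Longrightarrow> b<k \<Longrightarrow> p<k \<Longrightarrow> sat e env (Fpair a b p k) = pair_m e (env a) (env b) (env p)"
  by (simp add: Fpair_def pair_m_def)
lemma sat_Fsucc[simp]: "x<k \<Longrightarrow> y<k \<Longrightarrow> sat e env (Fsucc x y k) = succ_m e (env x) (env y)"
  by (simp add: Fsucc_def succ_m_def)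
lemma sat_Finductive[simp]: "x<k \<Longrightarrow> sat e env (Finductive x k) = inductive_m e (env x)"
  by (simp add: Finductive_def inductive_m_def)
lemma sat_Fomega[simp]: "x<k \<Longrightarrow> sat e env (Fomega x k) = omega_m e (env x)"
  by (simp add: Fomega_def omega_m_def)
lemma sat_Fin_omega[simp]: "x<k \<Longrightarrow> sat e env (Fin_omega x k) = in_omega_m e (env x)"
  by (simp add: Fin_omega_def in_omega_m_def)
lemma sat_Frel[simp]: "r<k \<Longrightarrow> a<k \<Longrightarrow> b<k \<Longrightarrow> sat e env (Frel r a b k) = rel_m e (env r) (env a) (env b)"
  by (simp add: Frel_def rel_m_def)
lemma sat_Frelation[simp]: "r<k \<Longrightarrow> sat e env (Frelation r k) = relation_m e (env r)"
  by (simp add: Frelation_def relation_m_def)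
lemma sat_Ffunction[simp]: "r<k \<Longrightarrow> sat e env (Ffunction r k) = function_m e (env r)"
  by (simp add: Ffunction_def function_m_def)
lemma sat_Fdom[simp]: "r<k \<Longrightarrow> a<k \<Longrightarrow> sat e env (Fdom r a k) = dom_is_m e (env r) (env a)"
  by (simp add: Fdom_def dom_is_m_def)
lemma sat_Fran[simp]: "r<k \<Longrightarrow> a<k \<Longrightarrow> sat e env (Fran r a k) = ran_is_m e (env r) (env a)"
  by (simp add: Fran_def ran_is_m_def)
lemma sat_Finj[simp]: "r<k \<Longrightarrow> sat e env (Finj r k) = injective_m e (env r)"
  by (simp add: Finj_def injective_m_def)
lemma sat_Fbij[simp]: "r<k \<Longrightarrow> a<k \<Longrightarrow> b<k \<Longrightarrow> sat e env (Fbij r a b k) = bij_m e (env r) (env a) (env b)"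
  by (simp add: Fbij_def bij_m_def)
lemma sat_Ffinite[simp]: "x<k \<Longrightarrow> sat e env (Ffinite x k) = finite_m e (env x)"
  by (simp add: Ffinite_def finite_m_def)
lemma sat_Ffinseq[simp]: "u<k \<Longrightarrow> s<k \<Longrightarrow> sat e env (Ffinseq u s k) = finseq_m e (env u) (env s)"
  by (simp add: Ffinseq_def finseq_m_def)



locale ZM = fixes e :: "'a \<Rightarrow> 'a \<Rightarrow> bool" assumes Z: "Z_FTM_omega e"
begin

lemma extm: "(\<And>z. e z x \<longleftrightarrow> e z y) \<Longrightarrow> x = y"
  using Z unfolding Z_FTM_omega_def ax_ext_def by blast

lemma sep: "\<exists>y. \<forall>z. e z y \<longleftrightarrow> e z x \<and> sat e (env(i := z)) phi"
  using Z unfolding Z_FTM_omega_def ax_separation_def by blast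

lemma upair_ex: "\<exists>p. upair_m e a b p"
  using Z unfolding Z_FTM_omega_def ax_pairing_def by blast

lemma pair_ex: "\<exists>p. pair_m e a b p"
  unfolding pair_m_def using upair_ex by blast

lemma upair_unique: "upair_m e a b p \<Longrightarrow> upair_m e a b p' \<Longrightarrow> p = p'"
  unfolding upair_m_def by (rule extm) simp

lemma pair_unique: assumes a: "pair_m e a b p" "pair_m e a b p'" shows "p = p'"
proof -
  obtain s t where st: "upair_m e a a s" "upair_m e a b t" "upair_m e s t p" using a(1) unfolding pair_m_def by blast
  obtain s' t' where st': "upair_m e a a s'" "upair_m e a b t'" "upair_m e s' t' p'" using a(2) unfolding pair_m_def by blast
  have 1: "s = s'" by (rule upair_unique[OF st(1) st'(1)])
  have 2: "t = t'" by (rule upair_unique[OF st(2) st'(2)])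
  have "upair_m e s t p'" using st'(3) 1 2 by simp
  then show ?thesis by (rule upair_unique[OF st(3)])
qed

lemma pair_inj: assumes "pair_m e a b p" "pair_m e a' b' p" shows "a = a' \<and> b = b'"
proof -
  obtain s t where st: "upair_m e a a s" "upair_m e a b t" "upair_m e s t p" using assms(1) unfolding pair_m_def by blast
  obtain s' t' where st': "upair_m e a' a' s'" "upair_m e a' b' t'" "upair_m e s' t' p" using assms(2) unfolding pair_m_def by blast
  have s: "\<And>z. e z s \<longleftrightarrow> z = a" "\<And>z. e z t \<longleftrightarrow> z = a \<or> z = b" "\<And>z. e z p \<longleftrightarrow> z = s \<or> z = t"
    using st unfolding upair_m_def by auto
  have s': "\<And>z. e z s' \<longleftrightarrow> z = a'" "\<And>z. e z t' \<longleftrightarrow> z = a' \<or> z = b'" "\<And>z. e z p \<longleftrightarrow> z = s' \<or> z = t'"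
    using st' unfolding upair_m_def by auto
  have aa: "a = a'"
  proof -
    have "s = s' \<or> s = t'" using s(3) s'(3) by simp
    moreover have "e a' s'" "e a' t'" using s'(1,2) by simp_all
    ultimately have "e a' s" by auto
    then show ?thesis using s(1) by simp
  qed
  have bb: "b = b'"
  proof -
    have c1: "t = s' \<or> t = t'" using s(3) s'(3) by simp
    have c2: "t' = s \<or> t' = t" using s(3)[of t'] s'(3)[of t'] by simp
    have bt: "e b t" using s(2) by simp
    have bt': "e b' t'" using s'(2) by simp
    show ?thesis
    proof (cases "t = t'")
      case True
      then have "b = a' \<or> b = b'" using bt s'(2) by simp
      moreover have "b = a' \<Longrightarrow> b' = b"
      proof -
        assume ba: "b = a'"
        have "e b' s \<or> e b' t" using c2 bt' by auto
        then show "b' = b" using s(1,2) ba aa by auto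
      qed
      ultimately show ?thesis by auto
    next
      case False
      then have "t = s'" using c1 by simp
      then have "b = a'" using bt s'(1) by simp
      have "e b' s \<or> e b' t" using c2 bt' by auto
      then show "b = b'" using s(1,2) \<open>b = a'\<close> aa by auto
    qed
  qed
  show ?thesis using aa bb by blast
qed

lemma union2: "\<exists>u. \<forall>z. e z u \<longleftrightarrow> e z A \<or> e z B"
proof -
  obtain p where p: "upair_m e A B p" using upair_ex by blast
  obtain u where u: "\<forall>z. e z u \<longleftrightarrow> (\<exists>y. e y p \<and> e z y)"
    using Z unfolding Z_FTM_omega_def ax_union_def by blast
  have "\<forall>z. e z u \<longleftrightarrow> e z A \<or> e z B" using p u unfolding upair_m_def by auto
  then show ?thesis by blast
qed

lemma unionset: "\<exists>u. \<forall>z. e z u \<longleftrightarrow> (\<exists>y. e y x \<and> e z y)"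
  using Z unfolding Z_FTM_omega_def ax_union_def by blast

lemma empty_unique: "empty_m e a \<Longrightarrow> empty_m e b \<Longrightarrow> a = b"
  unfolding empty_m_def by (rule extm) simp

lemma succ_unique: "succ_m e n a \<Longrightarrow> succ_m e n b \<Longrightarrow> a = b"
  unfolding succ_m_def by (rule extm) simp

lemma omega_ex: "\<exists>w. omega_m e w"
proof -
  obtain x where x: "inductive_m e x" using Z unfolding Z_FTM_omega_def ax_infinity_def by blast
  obtain y where y: "\<forall>z. e z y \<longleftrightarrow> e z x \<and> sat e ((\<lambda>_. x)(0 := z)) (FAll 1 (FImp (Finductive 1 2) (FMem 0 1)))"
    using sep by blast
  have y': "\<And>z. e z y \<longleftrightarrow> e z x \<and> (\<forall>a. inductive_m e a \<longrightarrow> e z a)" using y by simp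
  have "inductive_m e y"
    unfolding inductive_m_def
  proof (intro conjI allI impI)
    obtain z0 where z0: "empty_m e z0" "e z0 x" using x unfolding inductive_m_def by blast
    have "\<forall>a. inductive_m e a \<longrightarrow> e z0 a"
    proof (intro allI impI)
      fix a assume "inductive_m e a"
      then obtain z1 where z1: "empty_m e z1" "e z1 a" unfolding inductive_m_def by blast
      have "z1 = z0" by (rule empty_unique[OF z1(1) z0(1)])
      then show "e z0 a" using z1 by simp
    qed
    then have "e z0 y" using z0 y' by blast
    then show "\<exists>z0. empty_m e z0 \<and> e z0 y" using z0 by blast
  next
    fix n assume n: "e n y"
    then have "e n x" using y' by blast
    then obtain s where s: "succ_m e n s" "e s x" using x unfolding inductive_m_def by blast
    have "\<forall>a. inductive_m e a \<longrightarrow> e s a"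
    proof (intro allI impI)
      fix a assume a: "inductive_m e a"
      then have "e n a" using n y' by blast
      then obtain s1 where s1: "succ_m e n s1" "e s1 a" using a unfolding inductive_m_def by blast
      have "s1 = s" by (rule succ_unique[OF s1(1) s(1)])
      then show "e s a" using s1 by simp
    qed
    then have "e s y" using s y' by blast
    then show "\<exists>s. succ_m e n s \<and> e s y" using s by blast
  qed
  moreover have "\<forall>a. inductive_m e a \<longrightarrow> subset_m e y a" using y' unfolding subset_m_def by blast
  ultimately show ?thesis unfolding omega_m_def by blast
qed

lemma omega_unique: assumes "omega_m e w" "omega_m e w'" shows "w = w'"
proof -
  have "subset_m e w w'" "subset_m e w' w" using assms unfolding omega_m_def by blast+
  then show ?thesis unfolding subset_m_def by (intro extm) blast
qed

lemma nums: "\<exists>w z0 z1 z2. omega_m e w \<and> e z0 w \<and> e z1 w \<and> e z2 w \<and>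
   (\<forall>z. \<not> e z z0) \<and> (\<forall>z. e z z1 \<longleftrightarrow> z = z0) \<and> (\<forall>z. e z z2 \<longleftrightarrow> z = z0 \<or> z = z1)"
proof -
  obtain w where w: "omega_m e w" using omega_ex by blast
  then have ind: "inductive_m e w" unfolding omega_m_def by blast
  obtain z0 where z0: "empty_m e z0" "e z0 w" using ind unfolding inductive_m_def by blast
  obtain z1 where z1: "succ_m e z0 z1" "e z1 w" using ind z0 unfolding inductive_m_def by blast
  obtain z2 where z2: "succ_m e z1 z2" "e z2 w" using ind z1 unfolding inductive_m_def by blast
  have a: "\<forall>z. \<not> e z z0" using z0 unfolding empty_m_def by blast
  have b: "\<forall>z. e z z1 \<longleftrightarrow> z = z0" using z1(1) a unfolding succ_m_def by simp
  have c: "\<forall>z. e z z2 \<longleftrightarrow> z = z0 \<or> z = z1" using z2(1) b unfolding succ_m_def by simp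
  show ?thesis using w z0(2) z1(2) z2(2) a b c by blast
qed

lemma rel_char:
  assumes f: "\<forall>p. e p f \<longleftrightarrow> p = q0 \<or> p = q1" and q: "pair_m e c0 d0 q0" "pair_m e c1 d1 q1"
  shows "rel_m e f c d \<longleftrightarrow> (c = c0 \<and> d = d0) \<or> (c = c1 \<and> d = d1)"
proof -
  have "rel_m e f c d \<longleftrightarrow> pair_m e c d q0 \<or> pair_m e c d q1" unfolding rel_m_def using f by auto
  moreover have "pair_m e c d q0 \<longleftrightarrow> c = c0 \<and> d = d0" using q(1) pair_inj[of c d q0 c0 d0] by auto
  moreover have "pair_m e c d q1 \<longleftrightarrow> c = c1 \<and> d = d1" using q(2) pair_inj[of c d q1 c1 d1] by auto
  ultimately show ?thesis by simp
qed

lemma finite_upair: assumes t: "upair_m e a b t" shows "finite_m e t"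
proof -
  obtain w z0 z1 z2 where n: "omega_m e w" "e z0 w" "e z1 w" "e z2 w"
    "\<forall>z. \<not> e z z0" "\<forall>z. e z z1 \<longleftrightarrow> z = z0" "\<forall>z. e z z2 \<longleftrightarrow> z = z0 \<or> z = z1"
    using nums by blast
  have "e z0 z1" using n(6) by simp
  then have d01: "z0 \<noteq> z1" using n(5) by auto
  have tm: "\<And>z. e z t \<longleftrightarrow> z = a \<or> z = b" using t unfolding upair_m_def by simp
  obtain q0 where q0: "pair_m e z0 a q0" using pair_ex by blast
  obtain q1 where q1: "pair_m e z1 b q1" using pair_ex by blast
  show ?thesis
  proof (cases "a = b")
    case True
    obtain f where f: "upair_m e q0 q0 f" using upair_ex by blast
    have fm: "\<forall>p. e p f \<longleftrightarrow> p = q0 \<or> p = q0" using f unfolding upair_m_def by simp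
    have r: "\<And>c d. rel_m e f c d \<longleftrightarrow> c = z0 \<and> d = a" using rel_char[OF fm q0 q0] by simp
    have r2: "rel_m e f = (\<lambda>c d. c = z0 \<and> d = a)" by (intro ext) (simp add: r)
    have "relation_m e f" unfolding relation_m_def
    proof (intro allI impI)
      fix p assume "e p f" then show "\<exists>a b. pair_m e a b p" using fm q0 by metis
    qed
    moreover have "\<forall>x y y'. rel_m e f x y \<and> rel_m e f x y' \<longrightarrow> y = y'" by (simp add: r)
    moreover have "dom_is_m e f z1" unfolding dom_is_m_def by (simp add: r2 n(6))
    moreover have "ran_is_m e f t" unfolding ran_is_m_def using True by (simp add: r2 tm)
    moreover have "injective_m e f" unfolding injective_m_def by (simp add: r)
    ultimately have "bij_m e f z1 t" unfolding bij_m_def function_m_def by blast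
    then show ?thesis unfolding finite_m_def in_omega_m_def using n by blast
  next
    case False
    obtain f where f: "upair_m e q0 q1 f" using upair_ex by blast
    have fm: "\<forall>p. e p f \<longleftrightarrow> p = q0 \<or> p = q1" using f unfolding upair_m_def by simp
    have r: "\<And>c d. rel_m e f c d \<longleftrightarrow> (c = z0 \<and> d = a) \<or> (c = z1 \<and> d = b)" using rel_char[OF fm q0 q1] by simp
    have r2: "rel_m e f = (\<lambda>c d. (c = z0 \<and> d = a) \<or> (c = z1 \<and> d = b))" by (intro ext) (simp add: r)
    have "relation_m e f" unfolding relation_m_def
    proof (intro allI impI)
      fix p assume "e p f" then show "\<exists>a b. pair_m e a b p" using fm q0 q1 by metis
    qed
    moreover have "\<forall>x y y'. rel_m e f x y \<and> rel_m e f x y' \<longrightarrow> y = y'" using d01 by (auto simp add: r)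
    moreover have "dom_is_m e f z2" unfolding dom_is_m_def by (auto simp add: r2 n(7))
    moreover have "ran_is_m e f t" unfolding ran_is_m_def by (auto simp add: r2 tm)
    moreover have "injective_m e f" unfolding injective_m_def using False by (auto simp add: r)
    ultimately have "bij_m e f z2 t" unfolding bij_m_def function_m_def by blast
    then show ?thesis unfolding finite_m_def in_omega_m_def using n by blast
  qed
qed

lemma FC: "\<exists>Y. subset_m e X Y \<and> (\<forall>x. finite_m e x \<and> subset_m e x Y \<longrightarrow> e x Y)"
  using Z unfolding Z_FTM_omega_def ax_FC_def by blast

lemma upair_in: assumes Y: "\<forall>x. finite_m e x \<and> subset_m e x Y \<longrightarrow> e x Y"
  and ab: "e a Y" "e b Y" and t: "upair_m e a b t" shows "e t Y"
proof -
  have "finite_m e t" by (rule finite_upair[OF t])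
  moreover have "subset_m e t Y" unfolding subset_m_def
  proof (intro allI impI)
    fix z assume "e z t" then have "z = a \<or> z = b" using t unfolding upair_m_def by simp
    then show "e z Y" using ab by auto
  qed
  ultimately show ?thesis using Y by blast
qed

lemma pair_in: assumes Y: "\<forall>x. finite_m e x \<and> subset_m e x Y \<longrightarrow> e x Y"
  and ab: "e a Y" "e b Y" and p: "pair_m e a b p" shows "e p Y"
proof -
  obtain s t where st: "upair_m e a a s" "upair_m e a b t" "upair_m e s t p" using p unfolding pair_m_def by blast
  have "e s Y" by (rule upair_in[OF Y ab(1) ab(1) st(1)])
  moreover have "e t Y" by (rule upair_in[OF Y ab(1) ab(2) st(2)])
  ultimately show "e p Y" by (rule upair_in[OF Y _ _ st(3)])
qed

lemma product: "\<exists>z. \<forall>p. e p z \<longleftrightarrow> (\<exists>u v. e u U \<and> e v V \<and> pair_m e u v p)"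
proof -
  obtain A where A: "\<forall>z. e z A \<longleftrightarrow> e z U \<or> e z V" using union2 by blast
  obtain Y where Y: "subset_m e A Y" "\<forall>x. finite_m e x \<and> subset_m e x Y \<longrightarrow> e x Y" using FC by blast
  obtain z where z: "\<forall>p. e p z \<longleftrightarrow> e p Y \<and> sat e (((\<lambda>_. U)(2:=V))(0 := p))
      (FEx 3 (FEx 4 (FAnd (FMem 3 1) (FAnd (FMem 4 2) (Fpair 3 4 0 5)))))"
    using sep by blast
  have z': "\<And>p. e p z \<longleftrightarrow> e p Y \<and> (\<exists>u v. e u U \<and> e v V \<and> pair_m e u v p)"
    using z by simp
  have "\<forall>p. e p z \<longleftrightarrow> (\<exists>u v. e u U \<and> e v V \<and> pair_m e u v p)"
  proof (intro allI iffI)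
    fix p assume "e p z" then show "\<exists>u v. e u U \<and> e v V \<and> pair_m e u v p" using z' by blast
  next
    fix p assume "\<exists>u v. e u U \<and> e v V \<and> pair_m e u v p"
    then obtain u v where uv: "e u U" "e v V" "pair_m e u v p" by blast
    have "e u Y" "e v Y" using uv A Y(1) unfolding subset_m_def by blast+
    then have "e p Y" using pair_in[OF Y(2) _ _ uv(3)] by blast
    then show "e p z" using z' uv by blast
  qed
  then show ?thesis by blast
qed

lemma finsubsets: "\<exists>z. \<forall>x. e x z \<longleftrightarrow> (subset_m e x U \<and> finite_m e x)"
proof -
  obtain Y where Y: "subset_m e U Y" "\<forall>x. finite_m e x \<and> subset_m e x Y \<longrightarrow> e x Y" using FC by blast
  obtain z where z: "\<forall>x. e x z \<longleftrightarrow> e x Y \<and> sat e ((\<lambda>_. U)(0 := x)) (FAnd (Fsubset 0 1 2) (Ffinite 0 2))"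
    using sep by blast
  have z': "\<And>x. e x z \<longleftrightarrow> e x Y \<and> subset_m e x U \<and> finite_m e x" using z by simp
  have "\<forall>x. e x z \<longleftrightarrow> (subset_m e x U \<and> finite_m e x)"
  proof (intro allI iffI)
    fix x assume "e x z" then show "subset_m e x U \<and> finite_m e x" using z' by blast
  next
    fix x assume x: "subset_m e x U \<and> finite_m e x"
    then have "subset_m e x Y" using Y(1) unfolding subset_m_def by blast
    then have "e x Y" using Y(2) x by blast
    then show "e x z" using z' x by blast
  qed
  then show ?thesis by blast
qed

lemma finseq_finite: assumes fs: "finseq_m e U s" shows "finite_m e s"
proof -
  obtain n where n: "in_omega_m e n" "function_m e s" "dom_is_m e s n" "\<forall>a b. rel_m e s a b \<longrightarrow> e b U"
    using fs unfolding finseq_m_def by blast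
  obtain P where P: "\<forall>q. e q P \<longleftrightarrow> (\<exists>u v. e u n \<and> e v s \<and> pair_m e u v q)" using product by blast
  obtain g where g: "\<forall>q. e q g \<longleftrightarrow> e q P \<and> sat e ((\<lambda>_. P)(0 := q))
      (FEx 3 (FEx 4 (FEx 5 (FAnd (Fpair 3 4 0 6) (Fpair 3 5 4 6)))))"
    using sep by blast
  have g': "\<And>q. e q g \<longleftrightarrow> (\<exists>u v. e u n \<and> e v s \<and> pair_m e u v q) \<and>
      (\<exists>a p b. pair_m e a p q \<and> pair_m e a b p)"
    using g P by simp
  have relg: "\<And>a p. rel_m e g a p \<longleftrightarrow> e a n \<and> e p s \<and> (\<exists>b. pair_m e a b p)"
  proof
    fix a p assume "rel_m e g a p"
    then obtain q where q: "e q g" "pair_m e a p q" unfolding rel_m_def by blast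
    obtain u v where uv: "e u n" "e v s" "pair_m e u v q" using q(1) g' by blast
    obtain a' p' b where ab: "pair_m e a' p' q" "pair_m e a' b p'" using q(1) g' by blast
    have "u = a" "v = p" using pair_inj[OF uv(3) q(2)] by auto
    moreover have "a' = a" "p' = p" using pair_inj[OF ab(1) q(2)] by auto
    ultimately show "e a n \<and> e p s \<and> (\<exists>b. pair_m e a b p)" using uv ab by blast
  next
    fix a p assume h: "e a n \<and> e p s \<and> (\<exists>b. pair_m e a b p)"
    obtain q where q: "pair_m e a p q" using pair_ex by blast
    have "e q g" using g' h q by blast
    then show "rel_m e g a p" unfolding rel_m_def using q by blast
  qed
  have srel: "relation_m e s" and sfun: "\<forall>a b b'. rel_m e s a b \<and> rel_m e s a b' \<longrightarrow> b = b'"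
    using n(2) unfolding function_m_def by blast+
  have sdom: "\<And>a. e a n \<longleftrightarrow> (\<exists>b. rel_m e s a b)" using n(3) unfolding dom_is_m_def by blast
  have "relation_m e g" unfolding relation_m_def using g' by blast
  moreover have "\<forall>a p p'. rel_m e g a p \<and> rel_m e g a p' \<longrightarrow> p = p'"
  proof (intro allI impI)
    fix a p p' assume h: "rel_m e g a p \<and> rel_m e g a p'"
    then obtain b b' where bb: "pair_m e a b p" "pair_m e a b' p'" "e p s" "e p' s" using relg by blast
    then have "rel_m e s a b" "rel_m e s a b'" unfolding rel_m_def by blast+
    then have "b = b'" using sfun by blast
    then show "p = p'" using pair_unique bb by blast
  qed
  moreover have "dom_is_m e g n" unfolding dom_is_m_def
  proof (intro allI iffI)
    fix a assume "e a n"
    then obtain b where "rel_m e s a b" using sdom by blast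
    then obtain p where "e p s" "pair_m e a b p" unfolding rel_m_def by blast
    then show "\<exists>p. rel_m e g a p" using relg \<open>e a n\<close> by blast
  next
    fix a assume "\<exists>p. rel_m e g a p" then show "e a n" using relg by blast
  qed
  moreover have "ran_is_m e g s" unfolding ran_is_m_def
  proof (intro allI iffI)
    fix p assume p: "e p s"
    then obtain a b where ab: "pair_m e a b p" using srel unfolding relation_m_def by blast
    then have "rel_m e s a b" unfolding rel_m_def using p by blast
    then have "e a n" using sdom by blast
    then show "\<exists>a. rel_m e g a p" using relg p ab by blast
  next
    fix p assume "\<exists>a. rel_m e g a p" then show "e p s" using relg by blast
  qed
  moreover have "injective_m e g" unfolding injective_m_def
  proof (intro allI impI)
    fix a a' p assume "rel_m e g a p \<and> rel_m e g a' p"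
    then obtain b b' where "pair_m e a b p" "pair_m e a' b' p" using relg by blast
    then show "a = a'" using pair_inj by blast
  qed
  ultimately have "bij_m e g n s" unfolding bij_m_def function_m_def by blast
  then show ?thesis unfolding finite_m_def using n(1) by blast
qed

lemma finseqs: "\<exists>z. \<forall>s. e s z \<longleftrightarrow> finseq_m e U s"
proof -
  obtain w where w: "omega_m e w" using omega_ex by blast
  obtain W where W: "\<forall>z. e z W \<longleftrightarrow> (\<exists>y. e y w \<and> e z y)" using unionset by blast
  obtain A where A: "\<forall>z. e z A \<longleftrightarrow> e z W \<or> e z U" using union2 by blast
  obtain Y where Y: "subset_m e A Y" "\<forall>x. finite_m e x \<and> subset_m e x Y \<longrightarrow> e x Y" using FC by blast
  obtain z where z: "\<forall>x. e x z \<longleftrightarrow> e x Y \<and> sat e ((\<lambda>_. U)(0 := x)) (Ffinseq 1 0 2)"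
    using sep by blast
  have z': "\<And>x. e x z \<longleftrightarrow> e x Y \<and> finseq_m e U x" using z by simp
  have "\<forall>s. e s z \<longleftrightarrow> finseq_m e U s"
  proof (intro allI iffI)
    fix s assume "e s z" then show "finseq_m e U s" using z' by blast
  next
    fix s assume fs: "finseq_m e U s"
    obtain n where n: "in_omega_m e n" "function_m e s" "dom_is_m e s n" "\<forall>a b. rel_m e s a b \<longrightarrow> e b U"
      using fs unfolding finseq_m_def by blast
    obtain w' where w': "omega_m e w'" "e n w'" using n(1) unfolding in_omega_m_def by blast
    have "w' = w" by (rule omega_unique[OF w'(1) w])
    then have nw: "e n w" using w' by simp
    have "subset_m e s Y" unfolding subset_m_def
    proof (intro allI impI)
      fix p assume p: "e p s"
      then obtain a b where ab: "pair_m e a b p" using n(2) unfolding function_m_def relation_m_def by blast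
      then have r: "rel_m e s a b" unfolding rel_m_def using p by blast
      then have "e a n" using n(3) unfolding dom_is_m_def by blast
      then have "e a W" using W nw by blast
      then have "e a Y" using A Y(1) unfolding subset_m_def by blast
      moreover have "e b Y" using r n(4) A Y(1) unfolding subset_m_def by blast
      ultimately show "e p Y" using pair_in[OF Y(2) _ _ ab] by blast
    qed
    then have "e s Y" using Y(2) finseq_finite[OF fs] by blast
    then show "e s z" using z' fs by blast
  qed
  then show ?thesis by blast
qed

end

theorem lemma9p2:
  fixes e :: "'a \<Rightarrow> 'a \<Rightarrow> bool"
  assumes "Z_FTM_omega e"
  shows "(\<forall>U V. \<exists>z. \<forall>p. e p z \<longleftrightarrow> (\<exists>u v. e u U \<and> e v V \<and> pair_m e u v p))
       \<and> (\<forall>U. \<exists>z. \<forall>x. e x z \<longleftrightarrow> (subset_m e x U \<and> finite_m e x))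
       \<and> (\<forall>U. \<exists>z. \<forall>s. e s z \<longleftrightarrow> finseq_m e U s)"
proof -
  interpret ZM e by (unfold_locales) (rule assms)
  show ?thesis using product finsubsets finseqs by blast
qed

end
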